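(* Let $G$ be a topological category and $X$ a topological space with a continuous partial category action by $G$. Suppose $G$ is star open and the action is graph open. Let $Y$ and $i : X\to Y$ be as defined below. Then $i$ is an open map.
   Context: Conventions: $G$ is a small category; objects are identified with their identity morphisms, so ${\rm ob}(G)\subseteq{\rm mor}(G)$; $d(g), c(g)$ are domain and codomain, $G^2=\{(g,h)\mid d(g)=c(h)\}$. $G$ is a topological category if ${\rm mor}(G)$ is a topological space and composition $G^2\to{\rm mor}(G)$ is continuous (with $G^2$ carrying the relative product topology). A partial category action by $G$ on $X$ is a partial function ${\rm mor}(G)\times X\to X$, $(g,x)\mapsto g\cdot x$ where defined, such that: (C1) for every $x$ there is $e\in{\rm ob}(G)$ with $e\cdot x$ defined, and whenever $f\in{\rm ob}(G)$ and $f\cdot x$ is defined, $f\cdot x=x$; (C2) if $g\cdot x$ is defined then $d(g)\cdot x$ is defined; (C3) if $(g,h)\in G^2$ and $h\cdot x$ is defined, then $(gh)\cdot x$ is defined iff $g\cdot(h\cdot x)$ is defined, and then they are equal. It is a continuous partial category action if moreover (CA1) $X_e=\{x\mid e\cdot x\text{ defined}\}$ is open in $X$ for every $e\in{\rm ob}(G)$, and (CA2) the map $(g,x)\mapsto g\cdot x$ is continuous on its domain with the relative product topology. $G$ is star open if $d^{-1}(e) = \{g\in{\rm mor}(G)\mid d(g)=e\}$ is open in ${\rm mor}(G)$ for every $e\in{\rm ob}(G)$. The action is graph open if $\Gamma=\{(g,x)\in{\rm mor}(G)\times X\mid g\cdot x\text{ defined}\}$ is open in ${\rm mor}(G)\times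 X$. Construction: $\overline{X}=\{(g,x)\in{\rm mor}(G)\times X\mid d(g)\cdot x\text{ defined}\}$ with the relative product topology; $(g,x)\sim(g',x')$ if either (i) there is $h\in{\rm mor}(G)$ with $(g',h)\in G^2$, $h\cdot x$ defined, $g=g'h$ and $x'=h\cdot x$, or (ii) $x=x'$, $g,g'\in{\rm ob}(G)$ and both $g\cdot x$, $g'\cdot x'$ defined; $\simeq$ is the equivalence relation generated by $\sim$; $Y=\overline{X}/\simeq$ with the quotient topology, and $[g,x]$ is the class of $(g,x)$; $i : X\to Y$ is $i(x) = [e,x]$ for any $e\in{\rm ob}(G)$ with $e\cdot x$ defined (this is independent of the choice of $e$). *)

theory Defs
  imports "HOL-Analysis.Analysis"
begin

text \<open>A small category with morphism set M, object set Ob (objects are identity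
morphisms, so Ob \<subseteq> M), domain d, codomain c and composition cmp (cmp g h = gh,
defined when d g = c h).\<close>

definition composable :: "'g set \<Rightarrow> ('g \<Rightarrow> 'g) \<Rightarrow> ('g \<Rightarrow> 'g) \<Rightarrow> ('g \<times> 'g) set" where
  "composable M d c = {(g, h). g \<in> M \<and> h \<in> M \<and> d g = c h}"

definition small_category ::
  "'g set \<Rightarrow> 'g set \<Rightarrow> ('g \<Rightarrow> 'g) \<Rightarrow> ('g \<Rightarrow> 'g) \<Rightarrow> ('g \<Rightarrow> 'g \<Rightarrow> 'g) \<Rightarrow> bool" where
  "small_category M Ob d c cmp \<longleftrightarrow>
     Ob \<subseteq> M \<and>
     (\<forall>g\<in>M. d g \<in> Ob \<and> c g \<in> Ob) \<and>
     (\<forall>e\<in>Ob. d e = e \<and> c e = e) \<and>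
     (\<forall>(g, h)\<in>composable M d c. cmp g h \<in> M \<and> d (cmp g h) = d h \<and> c (cmp g h) = c g) \<and>
     (\<forall>f\<in>M. \<forall>g\<in>M. \<forall>h\<in>M. d f = c g \<and> d g = c h \<longrightarrow> cmp (cmp f g) h = cmp f (cmp g h)) \<and>
     (\<forall>g\<in>M. cmp (c g) g = g \<and> cmp g (d g) = g)"

definition topological_category ::
  "'g topology \<Rightarrow> 'g set \<Rightarrow> ('g \<Rightarrow> 'g) \<Rightarrow> ('g \<Rightarrow> 'g) \<Rightarrow> ('g \<Rightarrow> 'g \<Rightarrow> 'g) \<Rightarrow> bool" where
  "topological_category TG Ob d c cmp \<longleftrightarrow>
     small_category (topspace TG) Ob d c cmp \<and>
     continuous_map (subtopology (prod_topology TG TG) (composable (topspace TG) d c)) TG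
       (\<lambda>(g, h). cmp g h)"

definition star_open :: "'g topology \<Rightarrow> 'g set \<Rightarrow> ('g \<Rightarrow> 'g) \<Rightarrow> bool" where
  "star_open TG Ob d \<longleftrightarrow> (\<forall>e\<in>Ob. openin TG {g \<in> topspace TG. d g = e})"

definition act_graph :: "('g \<Rightarrow> 'x \<Rightarrow> 'x option) \<Rightarrow> ('g \<times> 'x) set" where
  "act_graph act = {(g, x). act g x \<noteq> None}"

definition partial_category_action ::
  "'g set \<Rightarrow> 'g set \<Rightarrow> ('g \<Rightarrow> 'g) \<Rightarrow> ('g \<Rightarrow> 'g) \<Rightarrow> ('g \<Rightarrow> 'g \<Rightarrow> 'g) \<Rightarrow> 'x set
     \<Rightarrow> ('g \<Rightarrow> 'x \<Rightarrow> 'x option) \<Rightarrow> bool" where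
  "partial_category_action M Ob d c cmp X act \<longleftrightarrow>
     (\<forall>g x y. act g x = Some y \<longrightarrow> g \<in> M \<and> x \<in> X \<and> y \<in> X) \<and>
     (\<forall>x\<in>X. \<exists>e\<in>Ob. act e x \<noteq> None) \<and>
     (\<forall>f\<in>Ob. \<forall>x. act f x \<noteq> None \<longrightarrow> act f x = Some x) \<and>
     (\<forall>g x. act g x \<noteq> None \<longrightarrow> act (d g) x \<noteq> None) \<and>
     (\<forall>(g, h)\<in>composable M d c. \<forall>x y. act h x = Some y \<longrightarrow> act (cmp g h) x = act g y)"

definition continuous_partial_category_action ::
  "'g topology \<Rightarrow> 'g set \<Rightarrow> ('g \<Rightarrow> 'g) \<Rightarrow> ('g \<Rightarrow> 'g) \<Rightarrow> ('g \<Rightarrow> 'g \<Rightarrow> 'g) \<Rightarrow> 'x topology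
     \<Rightarrow> ('g \<Rightarrow> 'x \<Rightarrow> 'x option) \<Rightarrow> bool" where
  "continuous_partial_category_action TG Ob d c cmp TX act \<longleftrightarrow>
     partial_category_action (topspace TG) Ob d c cmp (topspace TX) act \<and>
     (\<forall>e\<in>Ob. openin TX {x \<in> topspace TX. act e x \<noteq> None}) \<and>
     continuous_map (subtopology (prod_topology TG TX) (act_graph act)) TX
       (\<lambda>(g, x). the (act g x))"

definition graph_open :: "'g topology \<Rightarrow> 'x topology \<Rightarrow> ('g \<Rightarrow> 'x \<Rightarrow> 'x option) \<Rightarrow> bool" where
  "graph_open TG TX act \<longleftrightarrow> openin (prod_topology TG TX) (act_graph act)"

definition Xbar :: "'g set \<Rightarrow> ('g \<Rightarrow> 'g) \<Rightarrow> 'x set \<Rightarrow> ('g \<Rightarrow> 'x \<Rightarrow> 'x option) \<Rightarrow> ('g \<times> 'x) set" where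
  "Xbar M d X act = {(g, x). g \<in> M \<and> x \<in> X \<and> act (d g) x \<noteq> None}"

definition sim_rel ::
  "'g set \<Rightarrow> 'g set \<Rightarrow> ('g \<Rightarrow> 'g) \<Rightarrow> ('g \<Rightarrow> 'g) \<Rightarrow> ('g \<Rightarrow> 'g \<Rightarrow> 'g) \<Rightarrow> 'x set
     \<Rightarrow> ('g \<Rightarrow> 'x \<Rightarrow> 'x option) \<Rightarrow> (('g \<times> 'x) \<times> ('g \<times> 'x)) set" where
  "sim_rel M Ob d c cmp X act =
     {((g, x), (g', x')). (g, x) \<in> Xbar M d X act \<and> (g', x') \<in> Xbar M d X act \<and>
        ((\<exists>h\<in>M. d g' = c h \<and> act h x \<noteq> None \<and> g = cmp g' h \<and> act h x = Some x') \<or>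
         (x = x' \<and> g \<in> Ob \<and> g' \<in> Ob \<and> act g x \<noteq> None \<and> act g' x' \<noteq> None))}"

definition simeq_rel ::
  "'g set \<Rightarrow> 'g set \<Rightarrow> ('g \<Rightarrow> 'g) \<Rightarrow> ('g \<Rightarrow> 'g) \<Rightarrow> ('g \<Rightarrow> 'g \<Rightarrow> 'g) \<Rightarrow> 'x set
     \<Rightarrow> ('g \<Rightarrow> 'x \<Rightarrow> 'x option) \<Rightarrow> (('g \<times> 'x) \<times> ('g \<times> 'x)) set" where
  "simeq_rel M Ob d c cmp X act =
     ((sim_rel M Ob d c cmp X act \<union> (sim_rel M Ob d c cmp X act)\<inverse>)\<^sup>*)
       \<inter> (Xbar M d X act \<times> Xbar M d X act)"

definition quotient_topology :: "'a topology \<Rightarrow> ('a \<times> 'a) set \<Rightarrow> 'a set topology" where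
  "quotient_topology T R =
     topology (\<lambda>U. U \<subseteq> topspace T // R \<and> openin T {x \<in> topspace T. R `` {x} \<in> U})"

definition Ytop ::
  "'g topology \<Rightarrow> 'g set \<Rightarrow> ('g \<Rightarrow> 'g) \<Rightarrow> ('g \<Rightarrow> 'g) \<Rightarrow> ('g \<Rightarrow> 'g \<Rightarrow> 'g) \<Rightarrow> 'x topology
     \<Rightarrow> ('g \<Rightarrow> 'x \<Rightarrow> 'x option) \<Rightarrow> ('g \<times> 'x) set topology" where
  "Ytop TG Ob d c cmp TX act =
     quotient_topology (subtopology (prod_topology TG TX) (Xbar (topspace TG) d (topspace TX) act))
       (simeq_rel (topspace TG) Ob d c cmp (topspace TX) act)"

definition imap ::
  "'g set \<Rightarrow> 'g set \<Rightarrow> ('g \<Rightarrow> 'g) \<Rightarrow> ('g \<Rightarrow> 'g) \<Rightarrow> ('g \<Rightarrow> 'g \<Rightarrow> 'g) \<Rightarrow> 'x set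
     \<Rightarrow> ('g \<Rightarrow> 'x \<Rightarrow> 'x option) \<Rightarrow> 'x \<Rightarrow> ('g \<times> 'x) set" where
  "imap M Ob d c cmp X act x =
     simeq_rel M Ob d c cmp X act `` {(SOME e. e \<in> Ob \<and> act e x \<noteq> None, x)}"

end

theory Submission
  imports Defs
begin

lemma openin_quotient_topology:
  "openin (quotient_topology T R) U \<longleftrightarrow>
     U \<subseteq> topspace T // R \<and> openin T {x \<in> topspace T. R `` {x} \<in> U}"
proof -
  have "istopology (\<lambda>U. U \<subseteq> topspace T // R \<and> openin T {x \<in> topspace T. R `` {x} \<in> U})"
  proof -
    have i: "{x \<in> topspace T. R `` {x} \<in> S \<inter> S'} =
        {x \<in> topspace T. R `` {x} \<in> S} \<inter> {x \<in> topspace T. R `` {x} \<in> S'}" for S S' by auto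
    have u: "{x \<in> topspace T. R `` {x} \<in> \<Union>K} = \<Union>((\<lambda>S. {x \<in> topspace T. R `` {x} \<in> S}) ` K)" for K
      by auto
    show ?thesis unfolding istopology_def
    proof (rule conjI; intro allI impI)
      fix S S' assume "S \<subseteq> topspace T // R \<and> openin T {x \<in> topspace T. R `` {x} \<in> S}"
        "S' \<subseteq> topspace T // R \<and> openin T {x \<in> topspace T. R `` {x} \<in> S'}"
      then show "S \<inter> S' \<subseteq> topspace T // R \<and> openin T {x \<in> topspace T. R `` {x} \<in> S \<inter> S'}"
        unfolding i by blast
    next
      fix K assume K: "\<forall>S\<in>K. S \<subseteq> topspace T // R \<and> openin T {x \<in> topspace T. R `` {x} \<in> S}"
      show "\<Union>K \<subseteq> topspace T // R \<and> openin T {x \<in> topspace T. R `` {x} \<in> \<Union>K}"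
        unfolding u using K by blast
    qed
  qed
  then show ?thesis unfolding quotient_topology_def by simp
qed

theorem proposition5p6:
  fixes TG :: "'g topology" and TX :: "'x topology"
    and Ob :: "'g set" and d c :: "'g \<Rightarrow> 'g" and cmp :: "'g \<Rightarrow> 'g \<Rightarrow> 'g"
    and act :: "'g \<Rightarrow> 'x \<Rightarrow> 'x option"
  assumes A1: "topological_category TG Ob d c cmp"
    and A2: "continuous_partial_category_action TG Ob d c cmp TX act"
    and "star_open TG Ob d"
    and A4: "graph_open TG TX act"
  shows "open_map TX (Ytop TG Ob d c cmp TX act)
           (imap (topspace TG) Ob d c cmp (topspace TX) act)"
proof -
  define M where "M = topspace TG"
  define X where "X = topspace TX"
  define S where "S = sim_rel M Ob d c cmp X act"
  define Xb where "Xb = Xbar M d X act"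
  define R where "R = simeq_rel M Ob d c cmp X act"
  define \<Gamma> where "\<Gamma> = act_graph act"
  define F where "F = (\<lambda>p. act (fst p) (snd p))"
  define E where "E = (\<lambda>x. SOME e. e \<in> Ob \<and> act e x \<noteq> None)"
  have sc: "small_category M Ob d c cmp" using A1 unfolding topological_category_def M_def by simp
  have pca: "partial_category_action M Ob d c cmp X act"
    using A2 unfolding continuous_partial_category_action_def M_def X_def by simp
  have ObM: "Ob \<subseteq> M" and cOb: "\<And>g. g \<in> M \<Longrightarrow> c g \<in> Ob" and dOb: "\<And>e. e \<in> Ob \<Longrightarrow> d e = e"
    and cObe: "\<And>e. e \<in> Ob \<Longrightarrow> c e = e" and cid: "\<And>g. g \<in> M \<Longrightarrow> cmp (c g) g = g"
    using sc unfolding small_category_def by auto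
  have act_in: "\<And>g x y. act g x = Some y \<Longrightarrow> g \<in> M \<and> x \<in> X \<and> y \<in> X"
    and exE: "\<And>x. x \<in> X \<Longrightarrow> \<exists>e\<in>Ob. act e x \<noteq> None"
    and idact: "\<And>f x. f \<in> Ob \<Longrightarrow> act f x \<noteq> None \<Longrightarrow> act f x = Some x"
    and dact: "\<And>g x. act g x \<noteq> None \<Longrightarrow> act (d g) x \<noteq> None"
    and compact: "\<And>g h x y. (g, h) \<in> composable M d c \<Longrightarrow> act h x = Some y \<Longrightarrow> act (cmp g h) x = act g y"
  proof -
    note P = pca[unfolded partial_category_action_def]
    note P1 = P[THEN conjunct1] and P2 = P[THEN conjunct2, THEN conjunct1]
      and P3 = P[THEN conjunct2, THEN conjunct2, THEN conjunct1]
      and P4 = P[THEN conjunct2, THEN conjunct2, THEN conjunct2, THEN conjunct1]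
      and P5 = P[THEN conjunct2, THEN conjunct2, THEN conjunct2, THEN conjunct2]
    show "\<And>g x y. act g x = Some y \<Longrightarrow> g \<in> M \<and> x \<in> X \<and> y \<in> X" by (rule P1[rule_format])
    show "\<And>x. x \<in> X \<Longrightarrow> \<exists>e\<in>Ob. act e x \<noteq> None" by (rule P2[rule_format])
    show "\<And>f x. f \<in> Ob \<Longrightarrow> act f x \<noteq> None \<Longrightarrow> act f x = Some x" by (rule P3[rule_format])
    show "\<And>g x. act g x \<noteq> None \<Longrightarrow> act (d g) x \<noteq> None" by (rule P4[rule_format])
    show "\<And>g h x y. (g, h) \<in> composable M d c \<Longrightarrow> act h x = Some y \<Longrightarrow> act (cmp g h) x = act g y"
    proof -
      fix g h x y assume a: "(g, h) \<in> composable M d c" "act h x = Some y"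
      have "\<forall>x y. act h x = Some y \<longrightarrow> act (cmp g h) x = act g y" using bspec[OF P5 a(1)] by simp
      then show "act (cmp g h) x = act g y" using a(2) by blast
    qed
  qed
  have SXb: "S \<subseteq> Xb \<times> Xb"
  proof (rule subsetI)
    fix pq assume "pq \<in> S"
    moreover obtain g x g' x' where pq: "pq = ((g, x), (g', x'))" by (metis prod.collapse)
    ultimately have "(g, x) \<in> Xbar M d X act \<and> (g', x') \<in> Xbar M d X act"
      unfolding S_def sim_rel_def by (simp only: mem_Collect_eq case_prod_conv)
    then show "pq \<in> Xb \<times> Xb" unfolding pq Xb_def by blast
  qed
  have SF: "F p = F q" if "(p, q) \<in> S" for p q
  proof -
    obtain g x g' x' where pq: "p = (g, x)" "q = (g', x')" by fastforce
    have H: "(g, x) \<in> Xbar M d X act \<and> (g', x') \<in> Xbar M d X act \<and>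
        ((\<exists>h\<in>M. d g' = c h \<and> act h x \<noteq> None \<and> g = cmp g' h \<and> act h x = Some x') \<or>
         (x = x' \<and> g \<in> Ob \<and> g' \<in> Ob \<and> act g x \<noteq> None \<and> act g' x' \<noteq> None))"
      using that[unfolded pq S_def sim_rel_def] by (simp only: mem_Collect_eq case_prod_conv)
    then have x: "(g, x) \<in> Xbar M d X act" "(g', x') \<in> Xbar M d X act"
      and alt: "(\<exists>h\<in>M. d g' = c h \<and> act h x \<noteq> None \<and> g = cmp g' h \<and> act h x = Some x') \<or>
         (x = x' \<and> g \<in> Ob \<and> g' \<in> Ob \<and> act g x \<noteq> None \<and> act g' x' \<noteq> None)"
      by (blast, blast, blast)
    show ?thesis using alt
    proof
      assume "\<exists>h\<in>M. d g' = c h \<and> act h x \<noteq> None \<and> g = cmp g' h \<and> act h x = Some x'"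
      then obtain h where h: "h \<in> M" "d g' = c h" "g = cmp g' h" "act h x = Some x'" by blast
      have "g' \<in> M" using x unfolding Xbar_def by auto
      then have "(g', h) \<in> composable M d c" using h unfolding composable_def by auto
      then have "act (cmp g' h) x = act g' x'" by (rule compact) (rule h(4))
      then show ?thesis using h(3) unfolding pq F_def by simp
    next
      assume "x = x' \<and> g \<in> Ob \<and> g' \<in> Ob \<and> act g x \<noteq> None \<and> act g' x' \<noteq> None"
      then have e: "x = x'" "g \<in> Ob" "g' \<in> Ob" "act g x \<noteq> None" "act g' x' \<noteq> None" by blast+
      have "act g x = Some x" by (rule idact[OF e(2) e(4)])
      moreover have "act g' x' = Some x'" by (rule idact[OF e(3) e(5)])
      ultimately show ?thesis unfolding pq F_def using e(1) by simp
    qed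
  qed
  have R_eq: "R = (S \<union> S\<inverse>)\<^sup>* \<inter> (Xb \<times> Xb)"
    unfolding R_def simeq_rel_def S_def Xb_def by (rule refl)
  have RF: "F p = F q" if "(p, q) \<in> R" for p q
  proof -
    have "(p, q) \<in> (S \<union> S\<inverse>)\<^sup>*" using that unfolding R_eq by blast
    then show ?thesis
    proof (induction rule: rtrancl_induct)
      case base then show ?case by (rule refl)
    next
      case (step y z)
      from step(2) have "F y = F z"
      proof
        assume "(y, z) \<in> S" then show ?thesis by (rule SF)
      next
        assume "(y, z) \<in> S\<inverse>" then have "(z, y) \<in> S" by (rule converseD)
        then show ?thesis by (metis SF)
      qed
      then show ?case using step(3) by (rule trans[rotated]) 
    qed
  qed
  have Rsym: "(q, p) \<in> R" if "(p, q) \<in> R" for p q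
  proof -
    have pq: "(p, q) \<in> (S \<union> S\<inverse>)\<^sup>*" "p \<in> Xb" "q \<in> Xb"
      using that unfolding R_eq by blast+
    have "(q, p) \<in> ((S \<union> S\<inverse>)\<inverse>)\<^sup>*" using pq(1) by (rule rtrancl_converseI)
    moreover have "(S \<union> S\<inverse>)\<inverse> = S \<union> S\<inverse>" by (simp add: converse_Un sup_commute)
    ultimately have "(q, p) \<in> (S \<union> S\<inverse>)\<^sup>*" by simp
    then show ?thesis using pq unfolding R_eq by blast
  qed
  have Rtrans: "(p, r) \<in> R" if "(p, q) \<in> R" "(q, r) \<in> R" for p q r
  proof -
    have "(p, q) \<in> (S \<union> S\<inverse>)\<^sup>*" "(q, r) \<in> (S \<union> S\<inverse>)\<^sup>*" "p \<in> Xb" "r \<in> Xb"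
      using that unfolding R_eq by blast+
    then have "(p, r) \<in> (S \<union> S\<inverse>)\<^sup>*" "(p, r) \<in> Xb \<times> Xb"
      by (blast intro: rtrancl_trans[of p q _ r], blast)
    then show ?thesis unfolding R_eq by (rule IntI)
  qed
  have Rrefl: "(p, p) \<in> R" if "p \<in> Xb" for p
    using that unfolding R_eq by blast
  have RS: "(p, q) \<in> R" if "(p, q) \<in> S" for p q
  proof -
    have "(p, q) \<in> (S \<union> S\<inverse>)\<^sup>*" using that by blast
    moreover have "p \<in> Xb" "q \<in> Xb" using that SXb by blast+
    ultimately show ?thesis unfolding R_eq by blast
  qed
  have Rimg: "R `` {p} = R `` {q}" if "(p, q) \<in> R" for p q
    using that Rsym Rtrans by blast
  have Eprop: "E x \<in> Ob \<and> act (E x) x \<noteq> None" if "x \<in> X" for x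
    unfolding E_def using exE[OF that] by (rule someI2_bex) auto
  have EXb: "(E x, x) \<in> Xb" if "x \<in> X" for x
    using Eprop[OF that] that ObM dOb unfolding Xb_def Xbar_def by auto
  have FE: "F (E x, x) = Some x" if "x \<in> X" for x
    using idact[of "E x" x] Eprop[OF that] unfolding F_def by simp
  have imap_eq: "imap M Ob d c cmp X act x = R `` {(E x, x)}" for x
    unfolding imap_def R_def E_def by (rule refl)
  have \<Gamma>Xb: "\<Gamma> \<subseteq> Xb"
  proof
    fix p assume "p \<in> \<Gamma>"
    then obtain g x y where p: "p = (g, x)" "act g x = Some y"
      unfolding \<Gamma>_def act_graph_def by auto
    then show "p \<in> Xb" using act_in dact unfolding Xb_def Xbar_def by auto
  qed
  have XbMX: "Xb \<subseteq> M \<times> X" unfolding Xb_def Xbar_def by auto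
  have topXb: "topspace (subtopology (prod_topology TG TX) Xb) = Xb"
    using XbMX unfolding M_def X_def by auto
  have top\<Gamma>: "topspace (subtopology (prod_topology TG TX) \<Gamma>) = \<Gamma>"
    using \<Gamma>Xb XbMX unfolding M_def X_def by auto
  have cont: "continuous_map (subtopology (prod_topology TG TX) \<Gamma>) TX (\<lambda>p. the (F p))"
  proof -
    have "(\<lambda>p. the (F p)) = (\<lambda>(g, x). the (act g x))" unfolding F_def by (rule ext) (simp add: split_beta)
    moreover have "continuous_map (subtopology (prod_topology TG TX) \<Gamma>) TX (\<lambda>(g, x). the (act g x))"
      using A2 unfolding continuous_partial_category_action_def \<Gamma>_def by (elim conjE)
    ultimately show ?thesis by (simp only:)
  qed
  have \<Gamma>open: "openin (prod_topology TG TX) \<Gamma>" using A4 unfolding graph_open_def \<Gamma>_def .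
  show ?thesis
    unfolding open_map_def
  proof (intro allI impI)
    fix U assume U: "openin TX U"
    then have UX: "U \<subseteq> X" unfolding X_def by (simp add: openin_subset)
    define W where "W = {p \<in> \<Gamma>. the (F p) \<in> U}"
    have W1: "openin (subtopology (prod_topology TG TX) \<Gamma>) W"
      unfolding W_def using openin_continuous_map_preimage[OF cont U] unfolding top\<Gamma> .
    have W2: "openin (prod_topology TG TX) W" using openin_trans_full[OF W1 \<Gamma>open] .
    have W3: "openin (subtopology (prod_topology TG TX) Xb) W"
      unfolding openin_subtopology using W2 \<Gamma>Xb W_def by blast
    have Weq: "{p \<in> Xb. R `` {p} \<in> imap M Ob d c cmp X act ` U} = W"
    proof
      show "{p \<in> Xb. R `` {p} \<in> imap M Ob d c cmp X act ` U} \<subseteq> W"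
      proof clarify
        fix a b u assume ab: "(a, b) \<in> Xb" and u: "u \<in> U" and eq: "R `` {(a, b)} = imap M Ob d c cmp X act u"
        have uX: "u \<in> X" using UX u by blast
        have "(E u, u) \<in> R `` {(E u, u)}" using Rrefl[OF EXb[OF uX]] by blast
        then have "(E u, u) \<in> R `` {(a, b)}" using eq imap_eq by simp
        then have "((a, b), (E u, u)) \<in> R" by blast
        then have "F (a, b) = F (E u, u)" by (rule RF)
        then have "F (a, b) = Some u" using FE[OF uX] by simp
        then show "(a, b) \<in> W" unfolding W_def \<Gamma>_def act_graph_def F_def using u by auto
      qed
    next
      show "W \<subseteq> {p \<in> Xb. R `` {p} \<in> imap M Ob d c cmp X act ` U}"
      proof clarify
        fix g x assume "(g, x) \<in> W"
        then obtain u where u: "act g x = Some u" "u \<in> U"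
          unfolding W_def \<Gamma>_def act_graph_def F_def by auto
        have gxXb: "(g, x) \<in> Xb" using \<open>(g, x) \<in> W\<close> \<Gamma>Xb unfolding W_def by auto
        have gM: "g \<in> M" using act_in u by auto
        have uX: "u \<in> X" using act_in u by auto
        have cg: "c g \<in> Ob" using cOb gM .
        have comp: "(c g, g) \<in> composable M d c" using cg ObM gM dOb unfolding composable_def by auto
        have acgu: "act (c g) u = Some u" using compact[OF comp u(1)] cid[OF gM] u by simp
        have cgXb: "(c g, u) \<in> Xb" unfolding Xb_def Xbar_def using cg ObM uX dOb acgu by auto
        have s1: "((g, x), (c g, u)) \<in> S"
          unfolding S_def sim_rel_def
        proof (simp only: mem_Collect_eq case_prod_conv, intro conjI disjI1)
          show "(g, x) \<in> Xbar M d X act" using gxXb unfolding Xb_def .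
          show "(c g, u) \<in> Xbar M d X act" using cgXb unfolding Xb_def .
          show "\<exists>h\<in>M. d (c g) = c h \<and> act h x \<noteq> None \<and> g = cmp (c g) h \<and> act h x = Some u"
            using gM u(1) cid[OF gM] dOb[OF cg] by auto
        qed
        have s2: "((c g, u), (E u, u)) \<in> S"
          unfolding S_def sim_rel_def
        proof (simp only: mem_Collect_eq case_prod_conv, intro conjI disjI2)
          show "(c g, u) \<in> Xbar M d X act" using cgXb unfolding Xb_def .
          show "(E u, u) \<in> Xbar M d X act" using EXb[OF uX] unfolding Xb_def .
          show "u = u" ..
          show "c g \<in> Ob" by (rule cg)
          show "E u \<in> Ob" "act (E u) u \<noteq> None" using Eprop[OF uX] by auto
          show "act (c g) u \<noteq> None" using acgu by simp
        qed
        have "((g, x), (E u, u)) \<in> R" using Rtrans[OF RS[OF s1] RS[OF s2]] .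
        then have "R `` {(g, x)} = imap M Ob d c cmp X act u" using Rimg imap_eq by simp
        then show "(g, x) \<in> Xb \<and> R `` {(g, x)} \<in> imap M Ob d c cmp X act ` U"
          using gxXb u by auto
      qed
    qed
    have sub: "imap M Ob d c cmp X act ` U \<subseteq> Xb // R"
    proof
      fix y assume "y \<in> imap M Ob d c cmp X act ` U"
      then obtain u where u: "u \<in> U" "y = R `` {(E u, u)}" using imap_eq by auto
      then have "(E u, u) \<in> Xb" using EXb UX by auto
      then show "y \<in> Xb // R" unfolding u(2) by (rule quotientI)
    qed
    show "openin (Ytop TG Ob d c cmp TX act) (imap (topspace TG) Ob d c cmp (topspace TX) act ` U)"
      unfolding Ytop_def openin_quotient_topology M_def[symmetric] X_def[symmetric] Xb_def[symmetric] R_def[symmetric] topXb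
      using sub W3 unfolding Weq by (rule conjI)
  qed
qed

end
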